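(* Let $p$ be a prime and $(G,\theta)$ an oriented profinite group. Then $(G,\theta)$ is cyclotomic if and only if for every natural number $n$ and every closed subgroup $H\le G$, the kernel of the map $H^2(H,\mathbb{Z}_p(1)/p^{n-1})\to H^2(H,\mathbb{Z}_p(1)/p^{n})$ induced by the injection in the short exact sequence $0\to\mathbb{Z}_p(1)/p^{n-1}\to\mathbb{Z}_p(1)/p^{n}\to\mathbb{Z}_p(1)/p\to0$ is trivial.
   Context: An orientation of a profinite group $G$ is a continuous homomorphism $\theta:G\to\mathbb{Z}_p^\times$ whose image lies in $1+p\mathbb{Z}_p$ (so the induced action on $\mathbb{F}_p$ is trivial). $\mathbb{Z}_p(1)$ is $\mathbb{Z}_p$ with $G$-action $g.x=\theta(g)x$, and $\mathbb{Z}_p(1)/p^m=\mathbb{Z}_p(1)/p^m\mathbb{Z}_p(1)$; the injection $\mathbb{Z}_p(1)/p^{n-1}\to\mathbb{Z}_p(1)/p^n$ is induced by multiplication by $p$. $(G,\theta)$ is cyclotomic if for every closed subgroup $H\le G$ and every $m$, the natural map $H^1(H,\mathbb{Z}_p(1)/p^m)\to H^1(H,\mathbb{Z}_p(1)/p)$ of continuous cohomology is surjective. *)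

theory Defs
  imports "HOL-Analysis.Analysis" "HOL-Algebra.Group" "HOL-Number_Theory.Cong"
begin

definition topological_group :: "('g, 'b) monoid_scheme \<Rightarrow> 'g topology \<Rightarrow> bool" where
  "topological_group G T \<longleftrightarrow> group G \<and> topspace T = carrier G \<and>
     continuous_map (prod_topology T T) T (\<lambda>(x, y). x \<otimes>\<^bsub>G\<^esub> y) \<and>
     continuous_map T T (\<lambda>x. inv\<^bsub>G\<^esub> x)"

definition totally_disconnected_space :: "'a topology \<Rightarrow> bool" where
  "totally_disconnected_space T \<longleftrightarrow>
     (\<forall>S. connectedin T S \<longrightarrow> (\<forall>x\<in>S. \<forall>y\<in>S. x = y))"

definition profinite_group :: "('g, 'b) monoid_scheme \<Rightarrow> 'g topology \<Rightarrow> bool" where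
  "profinite_group G T \<longleftrightarrow> topological_group G T \<and> compact_space T \<and>
     Hausdorff_space T \<and> totally_disconnected_space T"

definition closed_subgroup :: "'g set \<Rightarrow> ('g, 'b) monoid_scheme \<Rightarrow> 'g topology \<Rightarrow> bool" where
  "closed_subgroup H G T \<longleftrightarrow> subgroup H G \<and> closedin T H"

text \<open>An element of Z_p is represented as a compatible sequence (x m) with x m in {0..<p^m}
and x (m+1) = x m mod p^m, i.e. as an element of the inverse limit of the Z/p^m.\<close>
definition padic_int :: "int \<Rightarrow> (nat \<Rightarrow> int) \<Rightarrow> bool" where
  "padic_int p x \<longleftrightarrow> (\<forall>m. 0 \<le> x m \<and> x m < p ^ m \<and> x (Suc m) mod p ^ m = x m)"

text \<open>An orientation: a continuous homomorphism theta: G \<rightarrow> Z_p^x with image in 1 + pZ_p.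
Continuity into the inverse limit Z_p = lim Z/p^m means each component g \<mapsto> theta g m
is continuous into the discrete set Z/p^m.\<close>
definition orientation :: "int \<Rightarrow> ('g, 'b) monoid_scheme \<Rightarrow> 'g topology \<Rightarrow> ('g \<Rightarrow> nat \<Rightarrow> int) \<Rightarrow> bool" where
  "orientation p G T \<theta> \<longleftrightarrow>
     (\<forall>g\<in>carrier G. padic_int p (\<theta> g)) \<and>
     (\<forall>g\<in>carrier G. \<forall>h\<in>carrier G. \<forall>m. \<theta> (g \<otimes>\<^bsub>G\<^esub> h) m = (\<theta> g m * \<theta> h m) mod p ^ m) \<and>
     (\<forall>g\<in>carrier G. \<theta> g 1 = 1) \<and>
     (\<forall>m. continuous_map T euclidean (\<lambda>g. \<theta> g m))"

text \<open>Cochains are int-valued functions, read modulo p^m; G acts on Z_p(1)/p^m by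
g.x = theta(g) x. Continuity means continuity into the discrete module Z/p^m.\<close>

definition cochain1 :: "'g topology \<Rightarrow> 'g set \<Rightarrow> int \<Rightarrow> ('g \<Rightarrow> int) \<Rightarrow> bool" where
  "cochain1 T H q f \<longleftrightarrow> continuous_map (subtopology T H) euclidean (\<lambda>x. f x mod q)"

definition cochain2 :: "'g topology \<Rightarrow> 'g set \<Rightarrow> int \<Rightarrow> ('g \<Rightarrow> 'g \<Rightarrow> int) \<Rightarrow> bool" where
  "cochain2 T H q c \<longleftrightarrow>
     continuous_map (subtopology (prod_topology T T) (H \<times> H)) euclidean (\<lambda>(x, y). c x y mod q)"

definition cocycle1 :: "int \<Rightarrow> ('g, 'b) monoid_scheme \<Rightarrow> 'g topology \<Rightarrow> ('g \<Rightarrow> nat \<Rightarrow> int)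
    \<Rightarrow> 'g set \<Rightarrow> nat \<Rightarrow> ('g \<Rightarrow> int) \<Rightarrow> bool" where
  "cocycle1 p G T \<theta> H m f \<longleftrightarrow> cochain1 T H (p ^ m) f \<and>
     (\<forall>g\<in>H. \<forall>h\<in>H. [f (g \<otimes>\<^bsub>G\<^esub> h) = f g + \<theta> g m * f h] (mod p ^ m))"

definition coboundary1 :: "int \<Rightarrow> ('g \<Rightarrow> nat \<Rightarrow> int) \<Rightarrow> 'g set \<Rightarrow> nat \<Rightarrow> ('g \<Rightarrow> int) \<Rightarrow> bool" where
  "coboundary1 p \<theta> H m f \<longleftrightarrow>
     (\<exists>a::int. \<forall>g\<in>H. [f g = \<theta> g m * a - a] (mod p ^ m))"

definition cocycle2 :: "int \<Rightarrow> ('g, 'b) monoid_scheme \<Rightarrow> 'g topology \<Rightarrow> ('g \<Rightarrow> nat \<Rightarrow> int)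
    \<Rightarrow> 'g set \<Rightarrow> nat \<Rightarrow> ('g \<Rightarrow> 'g \<Rightarrow> int) \<Rightarrow> bool" where
  "cocycle2 p G T \<theta> H m c \<longleftrightarrow> cochain2 T H (p ^ m) c \<and>
     (\<forall>g\<in>H. \<forall>h\<in>H. \<forall>k\<in>H.
        [\<theta> g m * c h k - c (g \<otimes>\<^bsub>G\<^esub> h) k + c g (h \<otimes>\<^bsub>G\<^esub> k) - c g h = 0] (mod p ^ m))"

definition coboundary2 :: "int \<Rightarrow> ('g, 'b) monoid_scheme \<Rightarrow> 'g topology \<Rightarrow> ('g \<Rightarrow> nat \<Rightarrow> int)
    \<Rightarrow> 'g set \<Rightarrow> nat \<Rightarrow> ('g \<Rightarrow> 'g \<Rightarrow> int) \<Rightarrow> bool" where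
  "coboundary2 p G T \<theta> H m c \<longleftrightarrow>
     (\<exists>b. cochain1 T H (p ^ m) b \<and>
        (\<forall>g\<in>H. \<forall>h\<in>H. [c g h = \<theta> g m * b h - b (g \<otimes>\<^bsub>G\<^esub> h) + b g] (mod p ^ m)))"

definition H1_reduction_surjective :: "int \<Rightarrow> ('g, 'b) monoid_scheme \<Rightarrow> 'g topology
    \<Rightarrow> ('g \<Rightarrow> nat \<Rightarrow> int) \<Rightarrow> 'g set \<Rightarrow> nat \<Rightarrow> bool" where
  "H1_reduction_surjective p G T \<theta> H m \<longleftrightarrow>
     (\<forall>f. cocycle1 p G T \<theta> H 1 f \<longrightarrow>
        (\<exists>f'. cocycle1 p G T \<theta> H m f' \<and> coboundary1 p \<theta> H 1 (\<lambda>g. f g - f' g)))"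

definition cyclotomic :: "int \<Rightarrow> ('g, 'b) monoid_scheme \<Rightarrow> 'g topology \<Rightarrow> ('g \<Rightarrow> nat \<Rightarrow> int) \<Rightarrow> bool" where
  "cyclotomic p G T \<theta> \<longleftrightarrow>
     (\<forall>H m. closed_subgroup H G T \<longrightarrow> m \<ge> 1 \<longrightarrow> H1_reduction_surjective p G T \<theta> H m)"

text \<open>The map H^2(H, Z_p(1)/p^(n-1)) \<rightarrow> H^2(H, Z_p(1)/p^n) induced by multiplication by p
has trivial kernel.\<close>
definition H2_mult_p_injective :: "int \<Rightarrow> ('g, 'b) monoid_scheme \<Rightarrow> 'g topology
    \<Rightarrow> ('g \<Rightarrow> nat \<Rightarrow> int) \<Rightarrow> 'g set \<Rightarrow> nat \<Rightarrow> bool" where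
  "H2_mult_p_injective p G T \<theta> H n \<longleftrightarrow>
     (\<forall>c. cocycle2 p G T \<theta> H (n - 1) c \<longrightarrow>
        coboundary2 p G T \<theta> H n (\<lambda>g h. p * c g h) \<longrightarrow>
        coboundary2 p G T \<theta> H (n - 1) c)"

end

theory Submission
  imports Defs
begin

lemma cont_int_iff:
  "continuous_map X euclidean (f :: 'a \<Rightarrow> int) \<longleftrightarrow>
     (\<forall>x\<in>topspace X. \<exists>U. openin X U \<and> x \<in> U \<and> (\<forall>y\<in>U. f y = f x))"
proof
  assume c: "continuous_map X euclidean f"
  show "\<forall>x\<in>topspace X. \<exists>U. openin X U \<and> x \<in> U \<and> (\<forall>y\<in>U. f y = f x)"
  proof
    fix x assume x: "x \<in> topspace X"
    have o: "openin X {y \<in> topspace X. f y \<in> {f x}}"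
      using c by (rule openin_continuous_map_preimage) (simp add: open_discrete)
    have m: "x \<in> {y \<in> topspace X. f y \<in> {f x}}" using x by simp
    have e: "\<forall>y\<in>{y \<in> topspace X. f y \<in> {f x}}. f y = f x" by simp
    show "\<exists>U. openin X U \<and> x \<in> U \<and> (\<forall>y\<in>U. f y = f x)"
      using o m e by blast
  qed
next
  assume lc: "\<forall>x\<in>topspace X. \<exists>U. openin X U \<and> x \<in> U \<and> (\<forall>y\<in>U. f y = f x)"
  have "openin X {x \<in> topspace X. f x \<in> U}" for U
  proof -
    have "\<forall>x\<in>{x \<in> topspace X. f x \<in> U}. \<exists>T. openin X T \<and> x \<in> T \<and> T \<subseteq> {x \<in> topspace X. f x \<in> U}"
    proof
      fix x assume "x \<in> {x \<in> topspace X. f x \<in> U}"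
      then have x: "x \<in> topspace X" "f x \<in> U" by auto
      obtain V where V: "openin X V" "x \<in> V" "\<forall>y\<in>V. f y = f x" using lc x by blast
      have "V \<subseteq> topspace X" using V(1) openin_subset by blast
      then have "V \<subseteq> {x \<in> topspace X. f x \<in> U}" using V(3) x(2) by auto
      then show "\<exists>T. openin X T \<and> x \<in> T \<and> T \<subseteq> {x \<in> topspace X. f x \<in> U}"
        using V(1,2) by blast
    qed
    then show ?thesis using openin_subopen by blast
  qed
  then show "continuous_map X euclidean f"
    unfolding continuous_map_def by simp
qed

lemma cont_int2:
  assumes "continuous_map X euclidean (f :: 'a \<Rightarrow> int)" "continuous_map X euclidean (g :: 'a \<Rightarrow> int)"
  shows "continuous_map X euclidean (\<lambda>x. (h (f x) (g x) :: int))"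
proof -
  show ?thesis unfolding cont_int_iff
  proof
    fix x assume x: "x \<in> topspace X"
    obtain U where U: "openin X U" "x \<in> U" "\<forall>y\<in>U. f y = f x" using assms(1) x unfolding cont_int_iff by blast
    obtain V where V: "openin X V" "x \<in> V" "\<forall>y\<in>V. g y = g x" using assms(2) x unfolding cont_int_iff by blast
    show "\<exists>W. openin X W \<and> x \<in> W \<and> (\<forall>y\<in>W. h (f y) (g y) = h (f x) (g x))"
    proof (intro exI conjI)
      show "openin X (U \<inter> V)" using U V by blast
      show "x \<in> U \<inter> V" using U V by blast
      show "\<forall>y\<in>U \<inter> V. h (f y) (g y) = h (f x) (g x)" using U(3) V(3) by simp
    qed
  qed
qed

lemma cont_int4:
  assumes "continuous_map X euclidean (f1 :: 'a \<Rightarrow> int)" "continuous_map X euclidean (f2 :: 'a \<Rightarrow> int)"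
    "continuous_map X euclidean (f3 :: 'a \<Rightarrow> int)" "continuous_map X euclidean (f4 :: 'a \<Rightarrow> int)"
  shows "continuous_map X euclidean (\<lambda>x. (h (f1 x) (f2 x) (f3 x) (f4 x) :: int))"
proof -
  show ?thesis unfolding cont_int_iff
  proof
    fix x assume x: "x \<in> topspace X"
    obtain U1 where U1: "openin X U1" "x \<in> U1" "\<forall>y\<in>U1. f1 y = f1 x" using assms(1) x unfolding cont_int_iff by blast
    obtain U2 where U2: "openin X U2" "x \<in> U2" "\<forall>y\<in>U2. f2 y = f2 x" using assms(2) x unfolding cont_int_iff by blast
    obtain U3 where U3: "openin X U3" "x \<in> U3" "\<forall>y\<in>U3. f3 y = f3 x" using assms(3) x unfolding cont_int_iff by blast
    obtain U4 where U4: "openin X U4" "x \<in> U4" "\<forall>y\<in>U4. f4 y = f4 x" using assms(4) x unfolding cont_int_iff by blast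
    show "\<exists>W. openin X W \<and> x \<in> W \<and> (\<forall>y\<in>W. h (f1 y) (f2 y) (f3 y) (f4 y) = h (f1 x) (f2 x) (f3 x) (f4 x))"
    proof (intro exI conjI)
      show "openin X (U1 \<inter> U2 \<inter> U3 \<inter> U4)" using U1 U2 U3 U4 by blast
      show "x \<in> U1 \<inter> U2 \<inter> U3 \<inter> U4" using U1 U2 U3 U4 by blast
      show "\<forall>y\<in>U1 \<inter> U2 \<inter> U3 \<inter> U4. h (f1 y) (f2 y) (f3 y) (f4 y) = h (f1 x) (f2 x) (f3 x) (f4 x)"
        using U1(3) U2(3) U3(3) U4(3) by simp
    qed
  qed
qed

lemma theta_mod:
  assumes "orientation p G T \<theta>" "g \<in> carrier G" "k \<le> n" "p > 0"
  shows "\<theta> g n mod p ^ k = \<theta> g k"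
  using assms(3)
proof (induction n)
  case 0
  have "padic_int p (\<theta> g)" using assms(1,2) unfolding orientation_def by blast
  then have "0 \<le> \<theta> g 0 \<and> \<theta> g 0 < 1" unfolding padic_int_def by (metis power_0)
  then show ?case using 0 by simp
next
  case (Suc n)
  have pa: "padic_int p (\<theta> g)" using assms(1,2) unfolding orientation_def by blast
  show ?case
  proof (cases "k = Suc n")
    case True
    have "0 \<le> \<theta> g (Suc n) \<and> \<theta> g (Suc n) < p ^ Suc n" using pa unfolding padic_int_def by blast
    then show ?thesis using True by (metis mod_pos_pos_trivial)
  next
    case False
    then have kn: "k \<le> n" using Suc by simp
    have "p ^ k dvd p ^ n" using kn by (simp add: le_imp_power_dvd)
    then have "\<theta> g (Suc n) mod p ^ k = (\<theta> g (Suc n) mod p ^ n) mod p ^ k"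
      by (simp add: mod_mod_cancel)
    also have "\<theta> g (Suc n) mod p ^ n = \<theta> g n" using pa unfolding padic_int_def by simp
    finally show ?thesis using Suc.IH kn by simp
  qed
qed


lemma sub_fst:
  assumes "H \<subseteq> topspace T"
  shows "continuous_map (subtopology (prod_topology T T) (H \<times> H)) (subtopology T H) fst"
  unfolding continuous_map_in_subtopology
  using continuous_map_from_subtopology[OF continuous_map_fst] by auto

lemma sub_snd:
  assumes "H \<subseteq> topspace T"
  shows "continuous_map (subtopology (prod_topology T T) (H \<times> H)) (subtopology T H) snd"
  unfolding continuous_map_in_subtopology
  using continuous_map_from_subtopology[OF continuous_map_snd] by auto

lemma sub_mult:
  assumes tg: "topological_group G T" and H: "subgroup H G"
  shows "continuous_map (subtopology (prod_topology T T) (H \<times> H)) (subtopology T H) (\<lambda>z. fst z \<otimes>\<^bsub>G\<^esub> snd z)"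
proof -
  have m: "continuous_map (prod_topology T T) T (\<lambda>(x, y). x \<otimes>\<^bsub>G\<^esub> y)"
    using tg unfolding topological_group_def by blast
  have eq: "(\<lambda>z. fst z \<otimes>\<^bsub>G\<^esub> snd z) = (\<lambda>(x, y). x \<otimes>\<^bsub>G\<^esub> y)" by (simp add: case_prod_beta')
  have "continuous_map (subtopology (prod_topology T T) (H \<times> H)) T (\<lambda>z. fst z \<otimes>\<^bsub>G\<^esub> snd z)"
    unfolding eq using continuous_map_from_subtopology[OF m] .
  moreover have "(\<lambda>z. fst z \<otimes>\<^bsub>G\<^esub> snd z) ` topspace (subtopology (prod_topology T T) (H \<times> H)) \<subseteq> H"
    using subgroup.m_closed[OF H] by auto
  ultimately show ?thesis unfolding continuous_map_in_subtopology by blast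
qed

lemma sub_theta:
  assumes "continuous_map T euclidean (\<phi> :: 'g \<Rightarrow> int)"
  shows "continuous_map (subtopology (prod_topology T T) (H \<times> H)) euclidean (\<lambda>z. \<phi> (fst z))"
  using continuous_map_compose[OF continuous_map_from_subtopology[OF continuous_map_fst] assms]
  by (simp add: o_def)


lemma theta_basic:
  assumes pp: "prime p" and or: "orientation p G T \<theta>" and g: "g \<in> carrier G"
  shows "p dvd \<theta> g (Suc k) - 1" "p ^ k dvd \<theta> g (Suc k) - \<theta> g k" "\<theta> g 1 = 1"
proof -
  have p0: "p > 0" using pp prime_gt_0_int by blast
  have "\<theta> g (Suc k) mod p ^ 1 = \<theta> g 1" by (rule theta_mod[OF or g _ p0]) simp
  moreover show t1: "\<theta> g 1 = 1" using or g unfolding orientation_def by blast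
  ultimately have "\<theta> g (Suc k) mod p = 1" by simp
  then show "p dvd \<theta> g (Suc k) - 1" by (metis dvd_minus_mod)
  have "\<theta> g (Suc k) mod p ^ k = \<theta> g k" by (rule theta_mod[OF or g _ p0]) simp
  then show "p ^ k dvd \<theta> g (Suc k) - \<theta> g k" by (metis dvd_minus_mod)
qed

lemma theta_mult:
  assumes or: "orientation p G T \<theta>" and g: "g \<in> carrier G" and h: "h \<in> carrier G"
  shows "p ^ n dvd \<theta> g n * \<theta> h n - \<theta> (g \<otimes>\<^bsub>G\<^esub> h) n"
proof -
  have "\<theta> (g \<otimes>\<^bsub>G\<^esub> h) n = (\<theta> g n * \<theta> h n) mod p ^ n" using or g h unfolding orientation_def by blast
  then show ?thesis by (metis dvd_minus_mod)
qed

lemma dir2: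
  assumes pp: "prime p" and or: "orientation p G T \<theta>" and tg: "topological_group G T"
    and H: "subgroup H G" and inj: "H2_mult_p_injective p G T \<theta> H (Suc k)"
  shows "H1_reduction_surjective p G T \<theta> H (Suc k)"
  unfolding H1_reduction_surjective_def
proof (intro allI impI)
  fix f assume fc: "cocycle1 p G T \<theta> H 1 f"
  define q where "q = p ^ Suc k"
  define r where "r = p ^ k"
  have p0: "p > 0" using pp prime_gt_0_int by blast
  have qr: "q = p * r" unfolding q_def r_def by simp
  have r1: "r \<ge> 1" unfolding r_def using p0 by simp
  have pq: "p \<le> q" using qr r1 p0 by (metis mult.right_neutral mult_left_mono less_imp_le)
  have HG: "H \<subseteq> carrier G" by (rule subgroup.subset[OF H])
  have grp: "group G" using tg unfolding topological_group_def by blast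
  have Htop: "H \<subseteq> topspace T" using tg HG unfolding topological_group_def by blast
  have mc: "\<And>g h. g \<in> H \<Longrightarrow> h \<in> H \<Longrightarrow> g \<otimes>\<^bsub>G\<^esub> h \<in> H" by (rule subgroup.m_closed[OF H])
  have thn1: "\<And>g. g \<in> H \<Longrightarrow> p dvd \<theta> g (Suc k) - 1" using theta_basic(1)[OF pp or] HG by auto
  have thnk: "\<And>g. g \<in> H \<Longrightarrow> r dvd \<theta> g (Suc k) - \<theta> g k" using theta_basic(2)[OF pp or] HG r_def by auto
  have th1: "\<And>g. g \<in> H \<Longrightarrow> \<theta> g 1 = 1" using theta_basic(3)[OF pp or] HG by auto
  have thmul: "\<And>g h. g \<in> H \<Longrightarrow> h \<in> H \<Longrightarrow> q dvd \<theta> g (Suc k) * \<theta> h (Suc k) - \<theta> (g \<otimes>\<^bsub>G\<^esub> h) (Suc k)"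
    unfolding q_def by (rule theta_mult[OF or]) (use HG in auto)
  have thcont: "\<And>m. continuous_map T euclidean (\<lambda>g. \<theta> g m)" using or unfolding orientation_def by blast
  define f0 where "f0 = (\<lambda>g. f g mod p)"
  have f0c: "continuous_map (subtopology T H) euclidean f0"
    using fc unfolding cocycle1_def cochain1_def f0_def by simp
  have fcoc: "\<And>g h. g \<in> H \<Longrightarrow> h \<in> H \<Longrightarrow> p dvd f (g \<otimes>\<^bsub>G\<^esub> h) - f g - f h"
  proof -
    fix g h assume g: "g \<in> H" and h: "h \<in> H"
    have "[f (g \<otimes>\<^bsub>G\<^esub> h) = f g + \<theta> g 1 * f h] (mod p ^ 1)" using fc g h unfolding cocycle1_def by blast
    then show "p dvd f (g \<otimes>\<^bsub>G\<^esub> h) - f g - f h" using th1[OF g] by (simp add: cong_iff_dvd_diff diff_diff_eq)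
  qed
  have f0dvd: "\<And>g. p dvd f g - f0 g" unfolding f0_def by (metis dvd_minus_mod)
  have f0bd: "\<And>g. 0 \<le> f0 g \<and> f0 g < q" unfolding f0_def using p0 pq by (meson pos_mod_bound pos_mod_sign order_less_le_trans)
  have f0q: "(\<lambda>g. f0 g mod q) = f0" using f0bd by (simp add: mod_pos_pos_trivial)
  define N where "N = (\<lambda>g h. \<theta> g (Suc k) * f0 h - f0 (g \<otimes>\<^bsub>G\<^esub> h) + f0 g)"
  have Ndvd: "p dvd N g h" if g: "g \<in> H" and h: "h \<in> H" for g h
  proof -
    have "N g h = (\<theta> g (Suc k) - 1) * f0 h - (f h - f0 h) + (f (g \<otimes>\<^bsub>G\<^esub> h) - f0 (g \<otimes>\<^bsub>G\<^esub> h))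
        - (f g - f0 g) - (f (g \<otimes>\<^bsub>G\<^esub> h) - f g - f h)"
      unfolding N_def by (simp add: algebra_simps)
    moreover have "p dvd (\<theta> g (Suc k) - 1) * f0 h" using thn1[OF g] by simp
    ultimately show ?thesis using f0dvd fcoc[OF g h]
      by (metis dvd_add dvd_diff)
  qed
  define c where "c = (\<lambda>g h. N g h div p)"
  have pc: "p * c g h = N g h" if "g \<in> H" "h \<in> H" for g h
    unfolding c_def using Ndvd[OF that] by simp
  have ccont: "cochain2 T H r c"
  proof -
    let ?S = "subtopology (prod_topology T T) (H \<times> H)"
    have a1: "continuous_map ?S euclidean (\<lambda>z. \<theta> (fst z) (Suc k))" by (rule sub_theta[OF thcont])
    have a2: "continuous_map ?S euclidean (\<lambda>z. f0 (snd z))"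
      using continuous_map_compose[OF sub_snd[OF Htop] f0c] by (simp add: o_def)
    have a3: "continuous_map ?S euclidean (\<lambda>z. f0 (fst z \<otimes>\<^bsub>G\<^esub> snd z))"
      using continuous_map_compose[OF sub_mult[OF tg H] f0c] by (simp add: o_def)
    have a4: "continuous_map ?S euclidean (\<lambda>z. f0 (fst z))"
      using continuous_map_compose[OF sub_fst[OF Htop] f0c] by (simp add: o_def)
    have "continuous_map ?S euclidean (\<lambda>z. (\<lambda>a b cc d. ((a * b - cc + d) div p) mod r)
        (\<theta> (fst z) (Suc k)) (f0 (snd z)) (f0 (fst z \<otimes>\<^bsub>G\<^esub> snd z)) (f0 (fst z)))"
      by (rule cont_int4[OF a1 a2 a3 a4])
    moreover have "(\<lambda>(x, y). c x y mod r) = (\<lambda>z. (\<lambda>a b cc d. ((a * b - cc + d) div p) mod r)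
        (\<theta> (fst z) (Suc k)) (f0 (snd z)) (f0 (fst z \<otimes>\<^bsub>G\<^esub> snd z)) (f0 (fst z)))"
      unfolding c_def N_def by (simp add: case_prod_beta')
    ultimately show ?thesis unfolding cochain2_def by simp
  qed
  have ccoc: "cocycle2 p G T \<theta> H k c"
    unfolding cocycle2_def
  proof (intro conjI ballI)
    show "cochain2 T H (p ^ k) c" using ccont r_def by simp
    fix g h l assume g: "g \<in> H" and h: "h \<in> H" and l: "l \<in> H"
    define S where "S = \<theta> g k * c h l - c (g \<otimes>\<^bsub>G\<^esub> h) l + c g (h \<otimes>\<^bsub>G\<^esub> l) - c g h"
    have as: "f0 (g \<otimes>\<^bsub>G\<^esub> (h \<otimes>\<^bsub>G\<^esub> l)) = f0 ((g \<otimes>\<^bsub>G\<^esub> h) \<otimes>\<^bsub>G\<^esub> l)"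
      using g h l HG grp by (simp add: group.is_monoid monoid.m_assoc subset_iff)
    have e1: "p * c h l = N h l" by (rule pc[OF h l])
    have e2: "p * c (g \<otimes>\<^bsub>G\<^esub> h) l = N (g \<otimes>\<^bsub>G\<^esub> h) l" by (rule pc[OF mc[OF g h] l])
    have e3: "p * c g (h \<otimes>\<^bsub>G\<^esub> l) = N g (h \<otimes>\<^bsub>G\<^esub> l)" by (rule pc[OF g mc[OF h l]])
    have e4: "p * c g h = N g h" by (rule pc[OF g h])
    have "p * S = (\<theta> g k - \<theta> g (Suc k)) * (p * c h l)
        + (\<theta> g (Suc k) * \<theta> h (Suc k) - \<theta> (g \<otimes>\<^bsub>G\<^esub> h) (Suc k)) * f0 l"
      using e1 e2 e3 e4 as unfolding S_def N_def by algebra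
    moreover have "q dvd (\<theta> g k - \<theta> g (Suc k)) * (p * c h l)"
    proof -
      have "r dvd \<theta> g k - \<theta> g (Suc k)" using thnk[OF g] by (metis dvd_diff_commute)
      then have "r * p dvd (\<theta> g k - \<theta> g (Suc k)) * (p * c h l)" by (simp add: mult_dvd_mono)
      then show ?thesis using qr by (simp add: mult.commute)
    qed
    moreover have "q dvd (\<theta> g (Suc k) * \<theta> h (Suc k) - \<theta> (g \<otimes>\<^bsub>G\<^esub> h) (Suc k)) * f0 l"
      using thmul[OF g h] by simp
    ultimately have "p * r dvd p * S" using qr by simp
    then have "r dvd S" using p0 by simp
    then show "[\<theta> g k * c h l - c (g \<otimes>\<^bsub>G\<^esub> h) l + c g (h \<otimes>\<^bsub>G\<^esub> l) - c g h = 0] (mod p ^ k)"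
      unfolding S_def r_def by (simp add: cong_iff_dvd_diff)
  qed
  have cob: "coboundary2 p G T \<theta> H (Suc k) (\<lambda>g h. p * c g h)"
    unfolding coboundary2_def
  proof (intro exI conjI ballI)
    show "cochain1 T H (p ^ Suc k) f0" unfolding cochain1_def using f0q f0c q_def by simp
    fix g h assume g: "g \<in> H" and h: "h \<in> H"
    show "[p * c g h = \<theta> g (Suc k) * f0 h - f0 (g \<otimes>\<^bsub>G\<^esub> h) + f0 g] (mod p ^ Suc k)"
      using pc[OF g h] unfolding N_def by simp
  qed
  have "coboundary2 p G T \<theta> H k c"
    using inj ccoc cob unfolding H2_mult_p_injective_def by simp
  then obtain e where ec: "cochain1 T H r e"
    and ee: "\<And>g h. g \<in> H \<Longrightarrow> h \<in> H \<Longrightarrow> [c g h = \<theta> g k * e h - e (g \<otimes>\<^bsub>G\<^esub> h) + e g] (mod r)"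
    unfolding coboundary2_def r_def by blast
  define f' where "f' = (\<lambda>g. f0 g - p * e g)"
  show "\<exists>f'. cocycle1 p G T \<theta> H (Suc k) f' \<and> coboundary1 p \<theta> H 1 (\<lambda>g. f g - f' g)"
  proof (intro exI conjI)
    show "cocycle1 p G T \<theta> H (Suc k) f'"
      unfolding cocycle1_def
    proof (intro conjI ballI)
      have "continuous_map (subtopology T H) euclidean (\<lambda>x. (\<lambda>a b. (a - p * b) mod q) (f0 x) (e x mod r))"
        using cont_int2[OF f0c ec[unfolded cochain1_def]] .
      moreover have "(\<lambda>x. f' x mod q) = (\<lambda>x. (\<lambda>a b. (a - p * b) mod q) (f0 x) (e x mod r))"
      proof
        fix x
        have "(p * e x) mod q = p * (e x mod r)" using qr by (simp add: mod_mult_mult1)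
        then show "f' x mod q = (f0 x - p * (e x mod r)) mod q" unfolding f'_def
          by (metis mod_diff_right_eq)
      qed
      ultimately show "cochain1 T H (p ^ Suc k) f'" unfolding cochain1_def q_def by simp
      fix g h assume g: "g \<in> H" and h: "h \<in> H"
      have d1: "r dvd c g h - (\<theta> g k * e h - e (g \<otimes>\<^bsub>G\<^esub> h) + e g)" using ee[OF g h] by (simp add: cong_iff_dvd_diff)
      then have d1': "q dvd p * (c g h - (\<theta> g k * e h - e (g \<otimes>\<^bsub>G\<^esub> h) + e g))" using qr by simp
      have d2: "q dvd p * (\<theta> g (Suc k) - \<theta> g k) * e h"
        using thnk[OF g] qr by (simp add: mult_dvd_mono mult.assoc)
      have "f' (g \<otimes>\<^bsub>G\<^esub> h) - (f' g + \<theta> g (Suc k) * f' h)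
          = - (p * (c g h - (\<theta> g k * e h - e (g \<otimes>\<^bsub>G\<^esub> h) + e g))) + p * (\<theta> g (Suc k) - \<theta> g k) * e h"
        using pc[OF g h] unfolding f'_def N_def by algebra
      then have "q dvd f' (g \<otimes>\<^bsub>G\<^esub> h) - (f' g + \<theta> g (Suc k) * f' h)"
        using d1' d2 by (metis dvd_add dvd_minus_iff)
      then show "[f' (g \<otimes>\<^bsub>G\<^esub> h) = f' g + \<theta> g (Suc k) * f' h] (mod p ^ Suc k)"
        unfolding q_def by (simp add: cong_iff_dvd_diff)
    qed
    show "coboundary1 p \<theta> H 1 (\<lambda>g. f g - f' g)"
      unfolding coboundary1_def
    proof (intro exI[of _ 0] ballI)
      fix g assume g: "g \<in> H"
      have "f g - f' g = (f g - f0 g) + p * e g" unfolding f'_def by simp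
      then have "p dvd f g - f' g" using f0dvd[of g] by (metis dvd_add dvd_triv_left)
      then show "[f g - f' g = \<theta> g 1 * 0 - 0] (mod p ^ 1)" by (simp add: cong_iff_dvd_diff)
    qed
  qed
qed


lemma dir1:
  assumes pp: "prime p" and or: "orientation p G T \<theta>" and tg: "topological_group G T"
    and H: "subgroup H G" and surj: "H1_reduction_surjective p G T \<theta> H (Suc k)"
  shows "H2_mult_p_injective p G T \<theta> H (Suc k)"
  unfolding H2_mult_p_injective_def
proof (intro allI impI)
  fix c assume cb: "coboundary2 p G T \<theta> H (Suc k) (\<lambda>g h. p * c g h)"
  define q where "q = p ^ Suc k"
  define r where "r = p ^ k"
  have p0: "p > 0" using pp prime_gt_0_int by blast
  have qr: "q = p * r" unfolding q_def r_def by simp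
  have pq: "p dvd q" using qr by simp
  have HG: "H \<subseteq> carrier G" by (rule subgroup.subset[OF H])
  have mc: "\<And>g h. g \<in> H \<Longrightarrow> h \<in> H \<Longrightarrow> g \<otimes>\<^bsub>G\<^esub> h \<in> H" by (rule subgroup.m_closed[OF H])
  have thn1: "\<And>g. g \<in> H \<Longrightarrow> p dvd \<theta> g (Suc k) - 1" using theta_basic(1)[OF pp or] HG by auto
  have thnk: "\<And>g. g \<in> H \<Longrightarrow> r dvd \<theta> g (Suc k) - \<theta> g k" using theta_basic(2)[OF pp or] HG r_def by auto
  have th1: "\<And>g. g \<in> H \<Longrightarrow> \<theta> g 1 = 1" using theta_basic(3)[OF pp or] HG by auto
  obtain b where bc: "cochain1 T H q b"
    and bb: "\<And>g h. g \<in> H \<Longrightarrow> h \<in> H \<Longrightarrow>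
      [p * c g h = \<theta> g (Suc k) * b h - b (g \<otimes>\<^bsub>G\<^esub> h) + b g] (mod q)"
    using cb unfolding coboundary2_def q_def by blast
  have bcq: "continuous_map (subtopology T H) euclidean (\<lambda>x. b x mod q)"
    using bc unfolding cochain1_def .
  have bcoc: "cocycle1 p G T \<theta> H 1 b"
    unfolding cocycle1_def
  proof (intro conjI ballI)
    have "continuous_map (subtopology T H) euclidean (\<lambda>x. (\<lambda>u v. u mod p) (b x mod q) (b x mod q))"
      by (rule cont_int2[OF bcq bcq])
    moreover have "(\<lambda>x. b x mod p) = (\<lambda>x. (\<lambda>u v. u mod p) (b x mod q) (b x mod q))"
      using pq by (simp add: mod_mod_cancel)
    ultimately show "cochain1 T H (p ^ 1) b" unfolding cochain1_def by simp
    fix g h assume g: "g \<in> H" and h: "h \<in> H"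
    have "q dvd p * c g h - (\<theta> g (Suc k) * b h - b (g \<otimes>\<^bsub>G\<^esub> h) + b g)"
      using bb[OF g h] by (simp add: cong_iff_dvd_diff)
    then have d1: "p dvd p * c g h - (\<theta> g (Suc k) * b h - b (g \<otimes>\<^bsub>G\<^esub> h) + b g)"
      using pq dvd_trans by blast
    have d2: "p dvd (\<theta> g (Suc k) - 1) * b h" using thn1[OF g] by simp
    have "b (g \<otimes>\<^bsub>G\<^esub> h) - (b g + \<theta> g 1 * b h)
        = (p * c g h - (\<theta> g (Suc k) * b h - b (g \<otimes>\<^bsub>G\<^esub> h) + b g)) + (\<theta> g (Suc k) - 1) * b h - p * c g h"
      using th1[OF g] by (simp add: algebra_simps)
    then have "p dvd b (g \<otimes>\<^bsub>G\<^esub> h) - (b g + \<theta> g 1 * b h)"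
      using d1 d2 by (metis dvd_add dvd_diff dvd_triv_left)
    then show "[b (g \<otimes>\<^bsub>G\<^esub> h) = b g + \<theta> g 1 * b h] (mod p ^ 1)" by (simp add: cong_iff_dvd_diff)
  qed
  obtain f' where f'c: "cocycle1 p G T \<theta> H (Suc k) f'" and cob1: "coboundary1 p \<theta> H 1 (\<lambda>g. b g - f' g)"
    using surj bcoc unfolding H1_reduction_surjective_def by blast
  obtain a where aa: "\<And>g. g \<in> H \<Longrightarrow> [b g - f' g = \<theta> g 1 * a - a] (mod p ^ 1)"
    using cob1 unfolding coboundary1_def by blast
  have pbf: "p dvd b g - f' g" if g: "g \<in> H" for g
    using aa[OF g] th1[OF g] by (simp add: cong_iff_dvd_diff)
  have f'cq: "continuous_map (subtopology T H) euclidean (\<lambda>x. f' x mod q)"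
    using f'c unfolding cocycle1_def cochain1_def q_def by blast
  have f'coc: "q dvd f' (g \<otimes>\<^bsub>G\<^esub> h) - (f' g + \<theta> g (Suc k) * f' h)" if "g \<in> H" "h \<in> H" for g h
    using f'c that unfolding cocycle1_def q_def by (simp add: cong_iff_dvd_diff)
  define e where "e = (\<lambda>g. ((b g - f' g) mod q) div p)"
  define W where "W = (\<lambda>g. (b g - f' g) div q)"
  have bdec: "b g = f' g + p * e g + q * W g" if g: "g \<in> H" for g
  proof -
    have "p dvd (b g - f' g) mod q" using pbf[OF g] pq by (simp add: dvd_mod_iff)
    then have "p * e g = (b g - f' g) mod q" unfolding e_def by simp
    moreover have "b g - f' g = q * W g + (b g - f' g) mod q" unfolding W_def by simp
    ultimately show ?thesis by simp
  qed
  show "coboundary2 p G T \<theta> H (Suc k - 1) c"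
    unfolding coboundary2_def
  proof (intro exI conjI ballI)
    have "continuous_map (subtopology T H) euclidean
        (\<lambda>x. (\<lambda>u v. ((u - v) mod q div p) mod r) (b x mod q) (f' x mod q))"
      by (rule cont_int2[OF bcq f'cq])
    moreover have "(\<lambda>x. e x mod r) = (\<lambda>x. (\<lambda>u v. ((u - v) mod q div p) mod r) (b x mod q) (f' x mod q))"
      unfolding e_def by (simp add: mod_diff_eq)
    ultimately show "cochain1 T H (p ^ (Suc k - 1)) e" unfolding cochain1_def r_def by simp
    fix g h assume g: "g \<in> H" and h: "h \<in> H"
    have D1: "q dvd p * c g h - (\<theta> g (Suc k) * b h - b (g \<otimes>\<^bsub>G\<^esub> h) + b g)"
      using bb[OF g h] by (simp add: cong_iff_dvd_diff)
    have D2: "q dvd f' (g \<otimes>\<^bsub>G\<^esub> h) - (f' g + \<theta> g (Suc k) * f' h)" by (rule f'coc[OF g h])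
    have D3: "q dvd p * (\<theta> g (Suc k) - \<theta> g k) * e h"
      using thnk[OF g] qr by (simp add: mult_dvd_mono mult.assoc)
    have D4: "q dvd q * (\<theta> g (Suc k) * W h - W (g \<otimes>\<^bsub>G\<^esub> h) + W g)" by simp
    have b1: "b h = f' h + p * e h + q * W h" by (rule bdec[OF h])
    have b2: "b (g \<otimes>\<^bsub>G\<^esub> h) = f' (g \<otimes>\<^bsub>G\<^esub> h) + p * e (g \<otimes>\<^bsub>G\<^esub> h) + q * W (g \<otimes>\<^bsub>G\<^esub> h)"
      by (rule bdec[OF mc[OF g h]])
    have b3: "b g = f' g + p * e g + q * W g" by (rule bdec[OF g])
    have "p * (c g h - (\<theta> g k * e h - e (g \<otimes>\<^bsub>G\<^esub> h) + e g))
        = (p * c g h - (\<theta> g (Suc k) * b h - b (g \<otimes>\<^bsub>G\<^esub> h) + b g))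
          - (f' (g \<otimes>\<^bsub>G\<^esub> h) - (f' g + \<theta> g (Suc k) * f' h))
          + p * (\<theta> g (Suc k) - \<theta> g k) * e h
          + q * (\<theta> g (Suc k) * W h - W (g \<otimes>\<^bsub>G\<^esub> h) + W g)"
      using b1 b2 b3 by algebra
    then have "q dvd p * (c g h - (\<theta> g k * e h - e (g \<otimes>\<^bsub>G\<^esub> h) + e g))"
      using D1 D2 D3 D4 by (metis dvd_add dvd_diff)
    then have "r dvd c g h - (\<theta> g k * e h - e (g \<otimes>\<^bsub>G\<^esub> h) + e g)"
      using qr p0 by simp
    then show "[c g h = \<theta> g (Suc k - 1) * e h - e (g \<otimes>\<^bsub>G\<^esub> h) + e g] (mod p ^ (Suc k - 1))"
      unfolding r_def by (simp add: cong_iff_dvd_diff)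
  qed
qed


theorem mainTheorem8:
  fixes G :: "('g, 'b) monoid_scheme" and T :: "'g topology"
    and \<theta> :: "'g \<Rightarrow> nat \<Rightarrow> int" and p :: int
  assumes "prime p"
    and "profinite_group G T"
    and "orientation p G T \<theta>"
  shows "cyclotomic p G T \<theta> \<longleftrightarrow>
    (\<forall>n H. n \<ge> 1 \<longrightarrow> closed_subgroup H G T \<longrightarrow> H2_mult_p_injective p G T \<theta> H n)"
proof -
  have tg: "topological_group G T" using assms(2) unfolding profinite_group_def by blast
  show ?thesis
  proof
    assume cyc: "cyclotomic p G T \<theta>"
    show "\<forall>n H. n \<ge> 1 \<longrightarrow> closed_subgroup H G T \<longrightarrow> H2_mult_p_injective p G T \<theta> H n"
    proof (intro allI impI)
      fix n :: nat and H assume n: "n \<ge> 1" and cs: "closed_subgroup H G T"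
      obtain k where k: "n = Suc k" using n by (cases n) auto
      have "H1_reduction_surjective p G T \<theta> H n" using cyc cs n unfolding cyclotomic_def by blast
      then show "H2_mult_p_injective p G T \<theta> H n"
        unfolding k using dir1[OF assms(1) assms(3) tg] cs unfolding closed_subgroup_def by blast
    qed
  next
    assume inj: "\<forall>n H. n \<ge> 1 \<longrightarrow> closed_subgroup H G T \<longrightarrow> H2_mult_p_injective p G T \<theta> H n"
    show "cyclotomic p G T \<theta>"
      unfolding cyclotomic_def
    proof (intro allI impI)
      fix H and m :: nat assume cs: "closed_subgroup H G T" and m: "m \<ge> 1"
      obtain k where k: "m = Suc k" using m by (cases m) auto
      have "H2_mult_p_injective p G T \<theta> H m" using inj cs m by blast
      then show "H1_reduction_surjective p G T \<theta> H m"
        unfolding k using dir2[OF assms(1) assms(3) tg] cs unfolding closed_subgroup_def by blast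
    qed
  qed
qed

end
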